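(* Let $X=\mathbb{R}^{\mathcal N}$ with the Euclidean inner product $\langle u,v\rangle=u^t v$. Let $\mathcal P\subset\mathbb{R}^p$ and let $\mu$ be a random variable with values in $\mathcal P$. For each $\mu\in\mathcal P$ let $A(\mu)$ be an invertible $\mathcal N\times\mathcal N$ matrix and $f(\mu)\in X$, let $l\in X$, and let $Z$ be an $\mathcal N\times n$ matrix such that $Z^tA(\mu)Z$ is invertible for every $\mu$. Let $u(\mu)$ solve $A(\mu)u(\mu)=f(\mu)$, let $\widetilde u(\mu)$ solve $Z^tA(\mu)Z\,\widetilde u(\mu)=Z^tf(\mu)$, and set $s(\mu)=\langle l,u(\mu)\rangle$, $\widetilde s(\mu)=\langle l,Z\widetilde u(\mu)\rangle$, $r(\mu)=A(\mu)Z\widetilde u(\mu)-f(\mu)$, $w(\mu)=A(\mu)^{-t}l$. Let $\Phi=\{\phi_1,\dots,\phi_{\mathcal N}\}$ be any orthonormal basis of $X$ (with the convention $\phi_i=0$ for $i>\mathcal N$), and let $\{\mathcal P_1,\dots,\mathcal P_K\}$ be a partition of $\mathcal P$; for $\mu\in\mathcal P$ let $k(\mu)$ be the unique $k$ with $\mu\in\mathcal P_k$. Let $N\in\mathbb{N}^*$. For $i=1,\dots,N$ put $D_i(\mu,\Phi)=\langle w(\mu),\phi_i\rangle$, and for $k=1,\dots,K$ put $\beta^{min}_{i,k}(\Phi)=\min_{\mu\in\mathcal P_k}D_i(\mu,\Phi)$ and $\beta^{max}_{i,k}(\Phi)=\max_{\mu\in\mathcal P_k}D_i(\mu,\Phi)$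 (assumed to exist). Define $\beta_i^{up}(\mu,\Phi)=\beta^{max}_{i,k(\mu)}(\Phi)$ if $\langle r(\mu),\phi_i\rangle>0$ and $\beta^{min}_{i,k(\mu)}(\Phi)$ otherwise; and $\beta_i^{low}(\mu,\Phi)=\beta^{min}_{i,k(\mu)}(\Phi)$ if $\langle r(\mu),\phi_i\rangle>0$ and $\beta^{max}_{i,k(\mu)}(\Phi)$ otherwise. Set $T_1^{low}(\mu,N,\Phi)=\sum_{i=1}^N\langle r(\mu),\phi_i\rangle\beta_i^{low}(\mu,\Phi)$, $T_1^{up}(\mu,N,\Phi)=\sum_{i=1}^N\langle r(\mu),\phi_i\rangle\beta_i^{up}(\mu,\Phi)$, $T_1(\mu,N,\Phi)=\max(|T_1^{low}(\mu,N,\Phi)|,|T_1^{up}(\mu,N,\Phi)|)$, and $T_2(N,\Phi)=\mathbf{E}_\mu\left(\left|\sum_{i>N}\langle w(\mu),\phi_i\rangle\langle r(\mu),\phi_i\rangle\right|\right)$ (assumed finite). Then for every $\alpha\in\,]0,1[$ and every $N\in\mathbb{N}^*$, $$P\left(|s(\mu)-\widetilde s(\mu)|>T_1(\mu,N,\Phi)+\frac{T_2(N,\Phi)}{\alpha}\right)\le\alpha.$$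
   Context: All maps of $\mu$ involved are assumed measurable so that the probability and expectation make sense; the probability and expectation are with respect to the distribution of the random parameter $\mu$. $M^t$ denotes the transpose of a matrix $M$ and $A(\mu)^{-t}$ the inverse of the transpose. *)

theory Defs
  imports "HOL-Analysis.Analysis" "HOL-Probability.Probability"
begin

definition kof :: "nat \<Rightarrow> (nat \<Rightarrow> 'p set) \<Rightarrow> 'p \<Rightarrow> nat" where
  "kof K Ps x = (THE k. k \<in> {1..K} \<and> x \<in> Ps k)"

text \<open>beta^min_{i,k} = min over P_k of D_i, beta^max_{i,k} = max over P_k of D_i
  (the min / max is assumed to exist in the theorem, so Inf / Sup are attained).\<close>
definition beta_min :: "(nat \<Rightarrow> 'p \<Rightarrow> real) \<Rightarrow> (nat \<Rightarrow> 'p set) \<Rightarrow> nat \<Rightarrow> nat \<Rightarrow> real" where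
  "beta_min D Ps i k = Inf (D i ` Ps k)"

definition beta_max :: "(nat \<Rightarrow> 'p \<Rightarrow> real) \<Rightarrow> (nat \<Rightarrow> 'p set) \<Rightarrow> nat \<Rightarrow> nat \<Rightarrow> real" where
  "beta_max D Ps i k = Sup (D i ` Ps k)"

text \<open>rc i x stands for <r(x), phi_i>.\<close>
definition beta_up :: "(nat \<Rightarrow> 'p \<Rightarrow> real) \<Rightarrow> (nat \<Rightarrow> 'p set) \<Rightarrow> nat \<Rightarrow> (nat \<Rightarrow> 'p \<Rightarrow> real)
    \<Rightarrow> nat \<Rightarrow> 'p \<Rightarrow> real" where
  "beta_up D Ps K rc i x =
     (if rc i x > 0 then beta_max D Ps i (kof K Ps x) else beta_min D Ps i (kof K Ps x))"

definition beta_low :: "(nat \<Rightarrow> 'p \<Rightarrow> real) \<Rightarrow> (nat \<Rightarrow> 'p set) \<Rightarrow> nat \<Rightarrow> (nat \<Rightarrow> 'p \<Rightarrow> real)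
    \<Rightarrow> nat \<Rightarrow> 'p \<Rightarrow> real" where
  "beta_low D Ps K rc i x =
     (if rc i x > 0 then beta_min D Ps i (kof K Ps x) else beta_max D Ps i (kof K Ps x))"

end

theory Submission
  imports Defs
begin

lemma parseval:
  fixes phi :: "nat \<Rightarrow> real^'n"
  assumes orth: "\<forall>i\<in>{1..CARD('n)}. \<forall>j\<in>{1..CARD('n)}. phi i \<bullet> phi j = (if i = j then 1 else 0)"
  shows "x \<bullet> y = (\<Sum>i=1..CARD('n). (x \<bullet> phi i) * (y \<bullet> phi i))"
proof -
  let ?I = "{1..CARD('n)}"
  define B where "B = phi ` ?I"
  have inj: "inj_on phi ?I"
  proof (rule inj_onI)
    fix i j assume "i \<in> ?I" "j \<in> ?I" "phi i = phi j"
    then show "i = j" using orth by (metis one_neq_zero)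
  qed
  have cardB: "card B = CARD('n)" unfolding B_def using card_image[OF inj] by simp
  have finB: "finite B" unfolding B_def by simp
  have norm1: "\<And>b. b \<in> B \<Longrightarrow> norm b = 1"
    using orth unfolding B_def by (auto simp: norm_eq_sqrt_inner)
  have po: "pairwise orthogonal B"
    using orth unfolding B_def pairwise_def orthogonal_def by auto
  have "0 \<notin> B" using norm1 by force
  then have ind: "independent B" using pairwise_orthogonal_independent po by blast
  have "UNIV \<subseteq> span B"
    by (rule card_ge_dim_independent[OF _ ind]) (auto simp: cardB)
  then have xe: "(\<Sum>b\<in>B. (x \<bullet> b) *\<^sub>R b) = x"
    using orthonormal_basis_expand[OF po norm1 _ finB] by blast
  have "x \<bullet> y = (\<Sum>b\<in>B. (x \<bullet> b) * (b \<bullet> y))"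
    by (subst xe[symmetric]) (simp add: inner_sum_left)
  also have "\<dots> = (\<Sum>i\<in>?I. (x \<bullet> phi i) * (y \<bullet> phi i))"
    unfolding B_def by (subst sum.reindex[OF inj]) (simp add: inner_commute)
  finally show ?thesis .
qed

lemma err_id:
  fixes A :: "real^'n^'n"
  assumes "invertible A" "A *v u = f"
  shows "(matrix_inv (transpose A) *v l) \<bullet> (A *v y - f) = l \<bullet> y - l \<bullet> u"
proof -
  let ?W = "matrix_inv (transpose A)"
  have "invertible (transpose A)" using transpose_invertible assms(1) by blast
  then have TW: "transpose A ** ?W = mat 1"
    unfolding invertible_def matrix_inv_def by (rule someI2_ex) auto
  have "A *v y - f = A *v (y - u)" using assms(2) by (simp add: matrix_vector_mult_diff_distrib)
  then have "(?W *v l) \<bullet> (A *v y - f) = ((?W *v l) v* A) \<bullet> (y - u)"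
    by (simp add: dot_lmul_matrix)
  also have "(?W *v l) v* A = transpose A *v (?W *v l)" by simp
  also have "\<dots> = l" by (simp add: matrix_vector_mul_assoc TW)
  finally show ?thesis by (simp add: inner_diff_right)
qed

theorem theorem1:
  fixes M :: "'a measure" and mu :: "'a \<Rightarrow> real^'p" and P :: "(real^'p) set"
    and A :: "real^'p \<Rightarrow> real^'n^'n" and f :: "real^'p \<Rightarrow> real^'n" and l :: "real^'n"
    and Z :: "real^'m^'n" and u :: "real^'p \<Rightarrow> real^'n" and ut :: "real^'p \<Rightarrow> real^'m"
    and phi :: "nat \<Rightarrow> real^'n" and K :: nat and Ps :: "nat \<Rightarrow> (real^'p) set"
    and N :: nat and \<alpha> :: real
  assumes M: "prob_space M"
    and mu_meas: "mu \<in> borel_measurable M"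
    and mu_P: "\<forall>\<omega>\<in>space M. mu \<omega> \<in> P"
    and A_inv: "\<forall>x\<in>P. invertible (A x)"
    and red_inv: "\<forall>x\<in>P. invertible (transpose Z ** A x ** Z)"
    and u_sol: "\<forall>x\<in>P. A x *v u x = f x"
    and ut_sol: "\<forall>x\<in>P. (transpose Z ** A x ** Z) *v ut x = transpose Z *v f x"
    and phi_orth: "\<forall>i\<in>{1..CARD('n)}. \<forall>j\<in>{1..CARD('n)}. phi i \<bullet> phi j = (if i = j then 1 else 0)"
    and phi_zero: "\<forall>i. i \<notin> {1..CARD('n)} \<longrightarrow> phi i = 0"
    and Ps_ne: "\<forall>k\<in>{1..K}. Ps k \<noteq> {}"
    and Ps_disj: "\<forall>k\<in>{1..K}. \<forall>k'\<in>{1..K}. k \<noteq> k' \<longrightarrow> Ps k \<inter> Ps k' = {}"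
    and Ps_cover: "(\<Union>k\<in>{1..K}. Ps k) = P"
  defines "w \<equiv> \<lambda>x. matrix_inv (transpose (A x)) *v l"
    and "r \<equiv> \<lambda>x. A x *v (Z *v ut x) - f x"
    and "s \<equiv> \<lambda>x. l \<bullet> u x"
    and "st \<equiv> \<lambda>x. l \<bullet> (Z *v ut x)"
  assumes beta_exist: "\<forall>i\<in>{1..N}. \<forall>k\<in>{1..K}.
       (\<exists>x\<in>Ps k. \<forall>y\<in>Ps k. w x \<bullet> phi i \<le> w y \<bullet> phi i) \<and> (\<exists>x\<in>Ps k. \<forall>y\<in>Ps k. w y \<bullet> phi i \<le> w x \<bullet> phi i)"
    and T2_fin: "integrable M (\<lambda>\<omega>. \<bar>\<Sum>i\<in>{N<..CARD('n)}. (w (mu \<omega>) \<bullet> phi i) * (r (mu \<omega>) \<bullet> phi i)\<bar>)"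
    and N_pos: "N \<ge> 1"
    and alpha: "0 < \<alpha>" "\<alpha> < 1"
  shows "measure M {\<omega>\<in>space M. \<bar>s (mu \<omega>) - st (mu \<omega>)\<bar> > max \<bar>\<Sum>i=1..N. (r (mu \<omega>) \<bullet> phi i) *
              beta_low (\<lambda>i x. w x \<bullet> phi i) Ps K (\<lambda>i x. r x \<bullet> phi i) i (mu \<omega>)\<bar>
            \<bar>\<Sum>i=1..N. (r (mu \<omega>) \<bullet> phi i) *
              beta_up (\<lambda>i x. w x \<bullet> phi i) Ps K (\<lambda>i x. r x \<bullet> phi i) i (mu \<omega>)\<bar>
          + (\<integral>\<omega>'. \<bar>\<Sum>i\<in>{N<..CARD('n)}. (w (mu \<omega>') \<bullet> phi i) * (r (mu \<omega>') \<bullet> phi i)\<bar> \<partial>M) / \<alpha>} \<le> \<alpha>"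
proof -
  interpret prob_space M by (rule M)
  define a where "a = (\<lambda>x i. (w x \<bullet> phi i) * (r x \<bullet> phi i))"
  define X where "X = (\<lambda>\<omega>. \<bar>\<Sum>i\<in>{N<..CARD('n)}. (w (mu \<omega>) \<bullet> phi i) * (r (mu \<omega>) \<bullet> phi i)\<bar>)"
  define E where "E = (\<integral>\<omega>'. X \<omega>' \<partial>M)"
  define T1 where "T1 = (\<lambda>x. max \<bar>\<Sum>i=1..N. (r x \<bullet> phi i) *
              beta_low (\<lambda>i x. w x \<bullet> phi i) Ps K (\<lambda>i x. r x \<bullet> phi i) i x\<bar>
            \<bar>\<Sum>i=1..N. (r x \<bullet> phi i) *
              beta_up (\<lambda>i x. w x \<bullet> phi i) Ps K (\<lambda>i x. r x \<bullet> phi i) i x\<bar>)"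
  have kof: "kof K Ps x \<in> {1..K} \<and> x \<in> Ps (kof K Ps x)" if "x \<in> P" for x
  proof -
    obtain k where k: "k \<in> {1..K}" "x \<in> Ps k" using Ps_cover \<open>x \<in> P\<close> by blast
    have "\<And>k'. k' \<in> {1..K} \<and> x \<in> Ps k' \<Longrightarrow> k' = k" using Ps_disj k by blast
    then have "kof K Ps x = k" unfolding kof_def using k by (intro the_equality) auto
    then show ?thesis using k by simp
  qed
  have sumsplit: "(\<Sum>i=1..N. a x i) + (\<Sum>i\<in>{N<..CARD('n)}. a x i) = (\<Sum>i=1..CARD('n). a x i)" for x
  proof (cases "N \<le> CARD('n)")
    case True
    have "{1..CARD('n)} = {1..N} \<union> {N<..CARD('n)}" using True N_pos by auto
    then show ?thesis by (simp add: sum.union_disjoint ivl_disj_int)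
  next
    case False
    then have "{N<..CARD('n)} = {}" by auto
    moreover have "(\<Sum>i=1..N. a x i) = (\<Sum>i=1..CARD('n). a x i)"
      by (rule sum.mono_neutral_right) (use False phi_zero in \<open>auto simp: a_def\<close>)
    ultimately show ?thesis by simp
  qed
  have point: "\<bar>s x - st x\<bar> \<le> T1 x + \<bar>\<Sum>i\<in>{N<..CARD('n)}. a x i\<bar>" if xP: "x \<in> P" for x
  proof -
    have "w x \<bullet> r x = st x - s x"
      unfolding w_def r_def s_def st_def using err_id A_inv u_sol xP by blast
    moreover have "w x \<bullet> r x = (\<Sum>i=1..CARD('n). a x i)"
      unfolding a_def by (rule parseval[OF phi_orth])
    ultimately have e: "\<bar>s x - st x\<bar> = \<bar>(\<Sum>i=1..N. a x i) + (\<Sum>i\<in>{N<..CARD('n)}. a x i)\<bar>"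
      using sumsplit by simp
    let ?k = "kof K Ps x"
    have bnd: "beta_min (\<lambda>i x. w x \<bullet> phi i) Ps i ?k \<le> w x \<bullet> phi i \<and>
               w x \<bullet> phi i \<le> beta_max (\<lambda>i x. w x \<bullet> phi i) Ps i ?k" if "i \<in> {1..N}" for i
    proof -
      from kof[OF xP] have kk: "?k \<in> {1..K}" "x \<in> Ps ?k" by auto
      from beta_exist that kk(1) obtain y1 y2 where
        "\<forall>y\<in>Ps ?k. w y1 \<bullet> phi i \<le> w y \<bullet> phi i" "\<forall>y\<in>Ps ?k. w y \<bullet> phi i \<le> w y2 \<bullet> phi i"
        by blast
      then have bb: "bdd_below ((\<lambda>x. w x \<bullet> phi i) ` Ps ?k)" "bdd_above ((\<lambda>x. w x \<bullet> phi i) ` Ps ?k)"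
        by (auto intro!: bdd_belowI bdd_aboveI)
      show ?thesis unfolding beta_min_def beta_max_def
        using cInf_lower[OF imageI[OF kk(2)] bb(1)] cSup_upper[OF imageI[OF kk(2)] bb(2)] by simp
    qed
    define lo where "lo = (\<Sum>i=1..N. (r x \<bullet> phi i) *
              beta_low (\<lambda>i x. w x \<bullet> phi i) Ps K (\<lambda>i x. r x \<bullet> phi i) i x)"
    define up where "up = (\<Sum>i=1..N. (r x \<bullet> phi i) *
              beta_up (\<lambda>i x. w x \<bullet> phi i) Ps K (\<lambda>i x. r x \<bullet> phi i) i x)"
    have "lo \<le> (\<Sum>i=1..N. a x i)" unfolding lo_def
    proof (rule sum_mono)
      fix i assume i: "i \<in> {1..N}"
      show "(r x \<bullet> phi i) * beta_low (\<lambda>i x. w x \<bullet> phi i) Ps K (\<lambda>i x. r x \<bullet> phi i) i x \<le> a x i"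
      proof (cases "r x \<bullet> phi i > 0")
        case True
        then show ?thesis using mult_left_mono[OF conjunct1[OF bnd[OF i]], of "r x \<bullet> phi i"]
          by (simp add: beta_low_def a_def mult.commute)
      next
        case False
        then show ?thesis using mult_left_mono_neg[OF conjunct2[OF bnd[OF i]], of "r x \<bullet> phi i"]
          by (simp add: beta_low_def a_def mult.commute)
      qed
    qed
    moreover have "(\<Sum>i=1..N. a x i) \<le> up" unfolding up_def
    proof (rule sum_mono)
      fix i assume i: "i \<in> {1..N}"
      show "a x i \<le> (r x \<bullet> phi i) * beta_up (\<lambda>i x. w x \<bullet> phi i) Ps K (\<lambda>i x. r x \<bullet> phi i) i x"
      proof (cases "r x \<bullet> phi i > 0")
        case True
        then show ?thesis using mult_left_mono[OF conjunct2[OF bnd[OF i]], of "r x \<bullet> phi i"]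
          by (simp add: beta_up_def a_def mult.commute)
      next
        case False
        then show ?thesis using mult_left_mono_neg[OF conjunct1[OF bnd[OF i]], of "r x \<bullet> phi i"]
          by (simp add: beta_up_def a_def mult.commute)
      qed
    qed
    ultimately have "\<bar>\<Sum>i=1..N. a x i\<bar> \<le> T1 x" unfolding T1_def lo_def[symmetric] up_def[symmetric]
      by linarith
    then show ?thesis using e by linarith
  qed
  have Xm: "X \<in> borel_measurable M" using T2_fin unfolding X_def by auto
  have Xint: "integrable M X" using T2_fin unfolding X_def by simp
  have E0: "E \<ge> 0" unfolding E_def X_def by simp
  have sub: "{\<omega>\<in>space M. \<bar>s (mu \<omega>) - st (mu \<omega>)\<bar> > T1 (mu \<omega>) + E / \<alpha>}
      \<subseteq> {\<omega>\<in>space M. X \<omega> > E / \<alpha>}"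
  proof (intro subsetI)
    fix \<omega> assume "\<omega> \<in> {\<omega>\<in>space M. \<bar>s (mu \<omega>) - st (mu \<omega>)\<bar> > T1 (mu \<omega>) + E / \<alpha>}"
    then have om: "\<omega> \<in> space M" "\<bar>s (mu \<omega>) - st (mu \<omega>)\<bar> > T1 (mu \<omega>) + E / \<alpha>" by auto
    have "\<bar>s (mu \<omega>) - st (mu \<omega>)\<bar> \<le> T1 (mu \<omega>) + X \<omega>"
      using point[of "mu \<omega>"] mu_P om(1) unfolding X_def a_def by blast
    then show "\<omega> \<in> {\<omega>\<in>space M. X \<omega> > E / \<alpha>}" using om by auto
  qed
  have meas: "{\<omega>\<in>space M. X \<omega> > E / \<alpha>} \<in> sets M" using Xm by measurable
  have key: "measure M {\<omega>\<in>space M. X \<omega> > E / \<alpha>} \<le> \<alpha>"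
  proof (cases "E = 0")
    case True
    have AE0: "AE \<omega> in M. X \<omega> = 0"
      using integral_nonneg_eq_0_iff_AE[OF Xint] True unfolding E_def X_def by simp
    have Xnn: "\<And>\<omega>. X \<omega> \<ge> 0" unfolding X_def by simp
    have eq: "{\<omega>\<in>space M. \<not> X \<omega> = 0} = {\<omega>\<in>space M. X \<omega> > E / \<alpha>}"
      using True Xnn by (auto simp del: abs_ge_zero intro: order.not_eq_order_implies_strict)
    have "emeasure M {\<omega>\<in>space M. X \<omega> > E / \<alpha>} = 0"
      using AE_iff_measurable[OF meas eq] AE0 by simp
    then show ?thesis using alpha by (simp add: measure_def)
  next
    case False
    then have Ep: "E > 0" using E0 by simp
    have AEnn: "AE \<omega> in M. 0 \<le> X \<omega>" by (simp add: X_def)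
    have c: "0 < E / \<alpha>" using Ep alpha by simp
    have "measure M {\<omega>\<in>space M. X \<omega> > E / \<alpha>} \<le> measure M {\<omega>\<in>space M. X \<omega> \<ge> E / \<alpha>}"
      by (rule finite_measure_mono) (use Xm in auto)
    also have "\<dots> \<le> E / (E / \<alpha>)"
      using integral_Markov_inequality_measure[OF Xint sets.top AEnn c] by (simp only: E_def[symmetric])
    also have "\<dots> = \<alpha>" using Ep alpha by simp
    finally show ?thesis .
  qed
  have "measure M {\<omega>\<in>space M. \<bar>s (mu \<omega>) - st (mu \<omega>)\<bar> > T1 (mu \<omega>) + E / \<alpha>} \<le> \<alpha>"
    using finite_measure_mono[OF sub meas] key by linarith
  then show ?thesis unfolding T1_def E_def X_def .
qed

end
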